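(* Let $n\ge2$, let $a_0,\dots,a_n$ be indeterminates and $P=\sum_{i=0}^na_ix^i$. For each $\boldsymbol\mu=(\mu_1,\dots,\mu_m)\in\mathcal M(n)$ with conjugate $\bar{\boldsymbol\mu}$, define $\tilde G_0=P$, $\tilde G_i=R_{\bar\mu_i}(\tilde G_{i-1},\tilde G_{i-1}')$ for $i\ge1$, regarded as polynomials in $x$ of formal degree $s_i=\sum_{k=i+1}^{\mu_1}\bar\mu_k$, and let $\mathcal S_{\boldsymbol\mu}$ be the set of polynomials in $a_0,\dots,a_n$ consisting of $D_j(\tilde G_i)$ for $0\le i\le\mu_1-2$ and $\bar\mu_{i+1}+1\le j\le s_i$; $D_{s_{\mu_1-1}}(\tilde G_{\mu_1-1})$; and $D_j(\tilde G_i)$ for $0\le i\le\mu_1-1$ and $1\le j\le\bar\mu_{i+1}$. Let $d_{\rm YHZ}$ be the maximum of the total degrees in $a_0,\dots,a_n$ of the polynomials in $\bigcup_{\boldsymbol\mu\in\mathcal M(n)}\mathcal S_{\boldsymbol\mu}$. Assume that for every $\boldsymbol\mu\in\mathcal M(n)$ and every $0\le i\le\mu_1-1$, the coefficient of $x^{s_i}$ in $\tilde G_i$ and the principal subresultant coefficient $\overline{R_{s_i}(\tilde G_i,\tilde G_i')}$ are not identically zero as polynomials in $a_0,\dots,a_n$. Then $d_{\rm YHZ}\ge 3^{\lfloor n/2\rfloor}$.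
   Context: $\mathcal M(n)$ is the set of nonincreasing tuples $(\mu_1,\dots,\mu_m)$ of positive integers with sum $n$; the conjugate is $\bar{\boldsymbol\mu}=(\bar\mu_1,\bar\mu_2,\dots)$ with $\bar\mu_i=\#\{j:\mu_j\ge i\}$. For two polynomials $F_0,F_1$ with $d_0=\deg F_0$ (formal degree), $d_1=\deg F_1$, and $0\le\delta_1\le d_0$: put $\delta_0=d_1+\delta_1-d_0$ if $\delta_1\ge1$ and $d_1+\delta_1\ge d_0$, else $\delta_0=1$; $\boldsymbol M$ is the $(\delta_0+\delta_1)\times(\delta_0+d_0)$ matrix with rows the coefficient vectors of $x^{\delta_0-1}F_0,\dots,F_0,x^{\delta_1-1}F_1,\dots,F_1$ w.r.t. $x^{\delta_0+d_0-1},\dots,1$; $R_{\delta_1}(F_0,F_1)=\operatorname{dp}\boldsymbol M$ where for a $p\times q$ matrix ($p\le q$) $\operatorname{dp}\boldsymbol M=\sum_{i=0}^{q-p}\det[\boldsymbol M_1,\dots,\boldsymbol M_{p-1},\boldsymbol M_{q-i}]x^i$; $\overline{R_{\delta_1}(F_0,F_1)}$ is its coefficient of $x^{d_0-\delta_1}$. Discriminant sequence: for $G=\sum_{i=0}^s b_ix^i$ (formal degree $s$), the discrimination matrix is the $2s\times2s$ matrix whose rows $2k-1$, $2k$ ($k=1,\dots,s$) are the coefficient vectors of $x^{s-k}G$ and $x^{s-k}G'$ w.r.t. $x^{2s-1},\dots,1$; $D_j(G)$ is its leading principal $2j\times2j$ minor. *)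

theory Defs
  imports "HOL-Library.Poly_Mapping" "HOL-Computational_Algebra.Polynomial"
    "Jordan_Normal_Form.Determinant"
begin

text \<open>Multivariate integer polynomials in the indeterminates a_0, a_1, ...:
  a monomial is an exponent vector (nat =>0 nat), a polynomial maps monomials to
  integer coefficients.\<close>
type_synonym mpoly = "(nat \<Rightarrow>\<^sub>0 nat) \<Rightarrow>\<^sub>0 int"

definition var_a :: "nat \<Rightarrow> mpoly" where
  "var_a i = Poly_Mapping.single (Poly_Mapping.single i 1) 1"

text \<open>Total degree (the zero polynomial gets degree 0).\<close>
definition total_degree :: "mpoly \<Rightarrow> nat" where
  "total_degree p = Max (insert 0 ((\<lambda>m. sum (Poly_Mapping.lookup m) (Poly_Mapping.keys m)) ` Poly_Mapping.keys p))"

definition genP :: "nat \<Rightarrow> mpoly poly" where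
  "genP n = (\<Sum>i\<le>n. monom (var_a i) i)"

definition Mset :: "nat \<Rightarrow> nat list set" where
  "Mset n = {mu. sorted_wrt (\<ge>) mu \<and> (\<forall>x\<in>set mu. 0 < x) \<and> sum_list mu = n}"

text \<open>Conjugate partition, 1-indexed: conj mu i = #{j. mu_j \<ge> i}.\<close>
definition conj :: "nat list \<Rightarrow> nat \<Rightarrow> nat" where
  "conj mu i = card {j. j < length mu \<and> mu ! j \<ge> i}"

text \<open>dp of a p x q matrix (p \<le> q): sum_{i=0}^{q-p} det[M_1..M_{p-1},M_{q-i}] x^i
  (columns 1-indexed in the paper; 0-indexed here).\<close>
definition dp :: "'a::comm_ring_1 mat \<Rightarrow> 'a poly" where
  "dp M = (let p = dim_row M; q = dim_col M in
     (\<Sum>i\<le>q - p. monom (det (mat p p (\<lambda>(r,c).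
        if c < p - 1 then M $$ (r,c) else M $$ (r, q - 1 - i)))) i))"

definition shcoeff :: "'a::zero poly \<Rightarrow> nat \<Rightarrow> nat \<Rightarrow> 'a" where
  "shcoeff F k e = (if k \<le> e then coeff F (e - k) else 0)"

definition delta0 :: "nat \<Rightarrow> nat \<Rightarrow> nat \<Rightarrow> nat" where
  "delta0 d0 d1 \<delta>1 = (if 1 \<le> \<delta>1 \<and> d0 \<le> d1 + \<delta>1 then d1 + \<delta>1 - d0 else 1)"

text \<open>Subresultant matrix: rows x^{\<delta>0-1}F0,...,F0,x^{\<delta>1-1}F1,...,F1 w.r.t.
  x^{\<delta>0+d0-1},...,1, where d0, d1 are the formal degrees.\<close>
definition subres_mat :: "nat \<Rightarrow> 'a::comm_ring_1 poly \<Rightarrow> nat \<Rightarrow> 'a poly \<Rightarrow> nat \<Rightarrow> 'a mat" where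
  "subres_mat \<delta>1 F0 d0 F1 d1 = (let \<delta>0 = delta0 d0 d1 \<delta>1; q = \<delta>0 + d0 in
     mat (\<delta>0 + \<delta>1) q (\<lambda>(r,c).
       if r < \<delta>0 then shcoeff F0 (\<delta>0 - 1 - r) (q - 1 - c)
       else shcoeff F1 (\<delta>1 - 1 - (r - \<delta>0)) (q - 1 - c)))"

definition subres :: "nat \<Rightarrow> 'a::comm_ring_1 poly \<Rightarrow> nat \<Rightarrow> 'a poly \<Rightarrow> nat \<Rightarrow> 'a poly" where
  "subres \<delta>1 F0 d0 F1 d1 = dp (subres_mat \<delta>1 F0 d0 F1 d1)"

definition psc :: "nat \<Rightarrow> 'a::comm_ring_1 poly \<Rightarrow> nat \<Rightarrow> 'a poly \<Rightarrow> nat \<Rightarrow> 'a" where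
  "psc \<delta>1 F0 d0 F1 d1 = coeff (subres \<delta>1 F0 d0 F1 d1) (d0 - \<delta>1)"

text \<open>Discrimination matrix of G of formal degree s (2s x 2s); rows 2k-1, 2k
  (1-indexed) are x^{s-k}G and x^{s-k}G' w.r.t. x^{2s-1},...,1.\<close>
definition discr_mat :: "'a::idom poly \<Rightarrow> nat \<Rightarrow> 'a mat" where
  "discr_mat G s = mat (2*s) (2*s) (\<lambda>(r,c).
     shcoeff (if even r then G else pderiv G) (s - (r div 2 + 1)) (2*s - 1 - c))"

definition Dj :: "nat \<Rightarrow> 'a::idom poly \<Rightarrow> nat \<Rightarrow> 'a" where
  "Dj j G s = det (mat (2*j) (2*j) (\<lambda>(r,c). discr_mat G s $$ (r,c)))"

definition sdeg :: "nat list \<Rightarrow> nat \<Rightarrow> nat" where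
  "sdeg mu i = (\<Sum>k\<in>{i+1..hd mu}. conj mu k)"

fun Gt :: "nat \<Rightarrow> nat list \<Rightarrow> nat \<Rightarrow> mpoly poly" where
  "Gt n mu 0 = genP n"
| "Gt n mu (Suc i) = subres (conj mu (Suc i)) (Gt n mu i) (sdeg mu i)
      (pderiv (Gt n mu i)) (sdeg mu i - 1)"

definition Sset :: "nat \<Rightarrow> nat list \<Rightarrow> mpoly set" where
  "Sset n mu =
     {Dj j (Gt n mu i) (sdeg mu i) | i j. i + 2 \<le> hd mu \<and> conj mu (i+1) + 1 \<le> j \<and> j \<le> sdeg mu i}
   \<union> {Dj (sdeg mu (hd mu - 1)) (Gt n mu (hd mu - 1)) (sdeg mu (hd mu - 1))}
   \<union> {Dj j (Gt n mu i) (sdeg mu i) | i j. i + 1 \<le> hd mu \<and> 1 \<le> j \<and> j \<le> conj mu (i+1)}"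

definition dYHZ :: "nat \<Rightarrow> nat" where
  "dYHZ n = Max (\<Union>mu\<in>Mset n. total_degree ` Sset n mu)"

end

theory Submission imports Defs begin

definition tdeg :: "(nat \<Rightarrow>\<^sub>0 nat) \<Rightarrow> nat" where
  "tdeg m = sum (Poly_Mapping.lookup m) (Poly_Mapping.keys m)"

definition homog :: "nat \<Rightarrow> mpoly \<Rightarrow> bool" where
  "homog d p \<longleftrightarrow> (\<forall>m\<in>Poly_Mapping.keys p. tdeg m = d)"

lemma tdeg_sum: assumes "finite S" "Poly_Mapping.keys m \<subseteq> S"
  shows "tdeg m = sum (Poly_Mapping.lookup m) S"
  unfolding tdeg_def
  by (rule sum.mono_neutral_left) (use assms in \<open>auto simp: in_keys_iff\<close>)

lemma tdeg_add: "tdeg (a + b) = tdeg a + tdeg b"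
proof -
  let ?S = "Poly_Mapping.keys a \<union> Poly_Mapping.keys b"
  have "tdeg (a+b) = sum (Poly_Mapping.lookup (a+b)) ?S"
    by (rule tdeg_sum) (use keys_add[of a b] in auto)
  also have "\<dots> = sum (Poly_Mapping.lookup a) ?S + sum (Poly_Mapping.lookup b) ?S"
    by (simp add: lookup_add sum.distrib)
  also have "\<dots> = tdeg a + tdeg b"
    by (subst (1 2) tdeg_sum[of ?S]) auto
  finally show ?thesis .
qed

lemma tdeg_0: "tdeg 0 = 0" by (simp add: tdeg_def)

lemma homog_0[simp]: "homog d 0" by (simp add: homog_def)

lemma homog_add: "homog d p \<Longrightarrow> homog d q \<Longrightarrow> homog d (p + q)"
  unfolding homog_def using keys_add[of p q] by blast

lemma homog_uminus: "homog d p \<Longrightarrow> homog d (- p)"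
  unfolding homog_def by simp

lemma homog_diff: "homog d p \<Longrightarrow> homog d q \<Longrightarrow> homog d (p - q)"
  using homog_add[of d p "-q"] homog_uminus[of d q] by simp

lemma homog_mult: "homog a p \<Longrightarrow> homog b q \<Longrightarrow> homog (a + b) (p * q)"
  unfolding homog_def using keys_mult[of p q] by (force simp: tdeg_add)

lemma homog_one: "homog 0 1"
  unfolding homog_def by (simp add: tdeg_0)

lemma homog_sum: "(\<And>i. i \<in> I \<Longrightarrow> homog d (f i)) \<Longrightarrow> homog d (sum f I)"
  by (induction I rule: infinite_finite_induct) (auto intro: homog_add)

lemma homog_prod: "finite I \<Longrightarrow> (\<And>i. i \<in> I \<Longrightarrow> homog e (f i)) \<Longrightarrow> homog (card I * e) (prod f I)"
proof (induction I rule: finite_induct)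
  case empty then show ?case by (simp add: homog_one)
next
  case (insert x F)
  then show ?case using homog_mult[of e "f x" "card F * e" "prod f F"] by auto
qed

lemma homog_of_nat: "homog 0 (of_nat k)"
  by (induction k) (auto intro: homog_add homog_one)

lemma homog_of_int: "homog 0 (of_int k)"
proof (cases "k \<ge> 0")
  case True
  then have "k = int (nat k)" by simp
  then show ?thesis using homog_of_nat[of "nat k"] by (metis of_int_of_nat_eq)
next
  case False
  then have "k = - int (nat (-k))" by simp
  then show ?thesis using homog_uminus[OF homog_of_nat[of "nat (-k)"]] by (metis of_int_minus of_int_of_nat_eq)
qed

lemma homog_var: "homog 1 (var_a i)"
  unfolding homog_def var_a_def tdeg_def by simp

lemma homog_if: "homog d p \<Longrightarrow> homog d (if b then p else 0)" by simp

lemma homog_det: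
  assumes "A \<in> carrier_mat N N" "\<And>i j. i < N \<Longrightarrow> j < N \<Longrightarrow> homog e (A $$ (i,j))"
  shows "homog (N * e) (det A)"
proof -
  have "homog (N*e) (of_int (sign p) * (\<Prod>i = 0..<N. A $$ (i, p i)))" if "p permutes {0..<N}" for p
  proof -
    have "homog (card {0..<N} * e) (\<Prod>i = 0..<N. A $$ (i, p i))"
      by (rule homog_prod) (use assms(2) permutes_in_image[OF that] in auto)
    then show ?thesis using homog_mult[OF homog_of_int] by fastforce
  qed
  then show ?thesis unfolding det_def'[OF assms(1)] by (intro homog_sum) auto
qed

lemma total_degree_homog: "homog d p \<Longrightarrow> p \<noteq> 0 \<Longrightarrow> total_degree p = d"
proof -
  assume h: "homog d p" and nz: "p \<noteq> 0"
  have ne: "Poly_Mapping.keys p \<noteq> {}" using nz by simp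
  have "(\<lambda>m. sum (Poly_Mapping.lookup m) (Poly_Mapping.keys m)) ` Poly_Mapping.keys p = {d}"
  proof -
    from ne obtain m0 where m0: "m0 \<in> Poly_Mapping.keys p" by blast
    show ?thesis using h m0 unfolding homog_def tdeg_def by (auto simp del: keys_eq_empty)
  qed
  then show ?thesis unfolding total_degree_def by simp
qed


definition homP :: "nat \<Rightarrow> mpoly poly \<Rightarrow> bool" where
  "homP e G \<longleftrightarrow> (\<forall>t. homog e (coeff G t))"

lemma homP_pderiv: "homP e G \<Longrightarrow> homP e (pderiv G)"
  unfolding homP_def coeff_pderiv using homog_mult[OF homog_of_nat] by (metis add_0)

lemma coeff_genP: "coeff (genP n) t = (if t \<le> n then var_a t else 0)"
  unfolding genP_def coeff_sum coeff_monom by (simp add: sum.delta')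

lemma homP_genP: "homP 1 (genP n)"
  unfolding homP_def coeff_genP using homog_var by simp

lemma degree_genP: "degree (genP n) \<le> n"
  by (rule degree_le) (simp add: coeff_genP)

lemma homog_shcoeff: "homP e F \<Longrightarrow> homog e (shcoeff F k t)"
  unfolding shcoeff_def homP_def by simp

lemma dim_subres_mat:
  "dim_row (subres_mat \<delta>1 F0 d0 F1 d1) = delta0 d0 d1 \<delta>1 + \<delta>1"
  "dim_col (subres_mat \<delta>1 F0 d0 F1 d1) = delta0 d0 d1 \<delta>1 + d0"
  unfolding subres_mat_def Let_def by simp_all

lemma homP_subres:
  assumes h0: "homP e F0" and h1: "homP e F1" and le: "\<delta>1 \<le> d0"
  shows "homP ((delta0 d0 d1 \<delta>1 + \<delta>1) * e) (subres \<delta>1 F0 d0 F1 d1)"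
proof -
  define M where "M = subres_mat \<delta>1 F0 d0 F1 d1"
  define p where "p = delta0 d0 d1 \<delta>1 + \<delta>1"
  define q where "q = delta0 d0 d1 \<delta>1 + d0"
  have dims: "dim_row M = p" "dim_col M = q" unfolding M_def p_def q_def dim_subres_mat by auto
  have pq: "p \<le> q" unfolding p_def q_def using le by simp
  have ent: "homog e (M $$ (r,c))" if "r < p" "c < q" for r c
    using that unfolding M_def subres_mat_def Let_def p_def q_def
    by (simp add: homog_shcoeff[OF h0] homog_shcoeff[OF h1])
  have "homog (p * e) (det (mat p p (\<lambda>(r,c). if c < p - 1 then M $$ (r,c) else M $$ (r, q - 1 - i))))" for i
    by (rule homog_det) (use ent pq in auto)
  then show ?thesis
    unfolding homP_def subres_def dp_def Let_def dims coeff_sum coeff_monom M_def[symmetric] p_def[symmetric]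
    by (auto intro!: homog_sum)
qed

lemma degree_subres:
  assumes le: "\<delta>1 \<le> d0"
  shows "degree (subres \<delta>1 F0 d0 F1 d1) \<le> d0 - \<delta>1"
proof -
  define M where "M = subres_mat \<delta>1 F0 d0 F1 d1"
  have dims: "dim_col M - dim_row M = d0 - \<delta>1" unfolding M_def dim_subres_mat by simp
  show ?thesis
    unfolding subres_def dp_def Let_def M_def[symmetric]
    by (rule degree_le) (auto simp: coeff_sum coeff_monom dims)
qed

lemma sdeg_Suc: "Suc i \<le> hd mu \<Longrightarrow> sdeg mu i = conj mu (Suc i) + sdeg mu (Suc i)"
  unfolding sdeg_def by (simp add: sum.atLeast_Suc_atMost)

lemma sdeg_hd: "sdeg mu (hd mu) = 0"
  unfolding sdeg_def by simp

fun E :: "nat list \<Rightarrow> nat \<Rightarrow> nat" where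
  "E mu 0 = 1"
| "E mu (Suc i) = (delta0 (sdeg mu i) (sdeg mu i - 1) (conj mu (Suc i)) + conj mu (Suc i)) * E mu i"

lemma homP_Gt: "i \<le> hd mu \<Longrightarrow> homP (E mu i) (Gt n mu i)"
proof (induction i)
  case 0 then show ?case using homP_genP by simp
next
  case (Suc i)
  then have h: "homP (E mu i) (Gt n mu i)" by simp
  have le: "conj mu (Suc i) \<le> sdeg mu i" using sdeg_Suc[OF Suc.prems] by simp
  show ?case using homP_subres[OF h homP_pderiv[OF h] le] by (simp add: mult.commute)
qed

lemma degree_Gt: "i \<le> hd mu \<Longrightarrow> n \<le> sdeg mu 0 \<Longrightarrow> degree (Gt n mu i) \<le> sdeg mu i"
proof (induction i)
  case 0 then show ?case using degree_genP[of n] by simp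
next
  case (Suc i)
  have le: "conj mu (Suc i) \<le> sdeg mu i" using sdeg_Suc[OF Suc.prems(1)] by simp
  show ?case using degree_subres[OF le, of "Gt n mu i"] sdeg_Suc[OF Suc.prems(1)] by simp
qed


lemma det2: "det (mat 2 2 f) = (f(0,0)*f(1,1) - f(0,1)*f(1,0) :: 'a::comm_ring_1)"
  apply (subst laplace_expansion_column[of _ 2 0]) apply auto
  apply (simp add: cofactor_def numeral_2_eq_2 lessThan_Suc)
  apply (subst laplace_expansion_column[of _ 1 0]) apply auto
  apply (simp add: cofactor_def lessThan_Suc mat_delete_def)
  apply (subst laplace_expansion_column[of _ 1 0]) apply auto
  apply (simp add: cofactor_def lessThan_Suc mat_delete_def)
  done

lemma D1_formula:
  assumes s: "1 \<le> s" and deg: "degree G \<le> s"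
  shows "Dj 1 G s = of_nat s * (coeff G s * coeff G s)"
proof -
  have e00: "discr_mat G s $$ (0,0) = coeff G s"
    using s unfolding discr_mat_def shcoeff_def by simp
  have e01: "discr_mat G s $$ (0,1) = coeff G (s-1)"
    using s unfolding discr_mat_def shcoeff_def by (simp add: numeral_2_eq_2)
  have e10: "discr_mat G s $$ (1,0) = coeff (pderiv G) s"
    using s unfolding discr_mat_def shcoeff_def by simp
  have e11: "discr_mat G s $$ (1,1) = coeff (pderiv G) (s-1)"
    using s unfolding discr_mat_def shcoeff_def by (simp add: numeral_2_eq_2)
  have z: "coeff G (Suc s) = 0" using deg by (simp add: coeff_eq_0)
  have "Dj 1 G s = discr_mat G s $$ (0,0) * discr_mat G s $$ (1,1) - discr_mat G s $$ (0,1) * discr_mat G s $$ (1,0)"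
    unfolding Dj_def by (simp add: det2)
  also have "\<dots> = of_nat s * (coeff G s * coeff G s)"
    unfolding e00 e01 e10 e11 coeff_pderiv z using s by (simp add: algebra_simps)
  finally show ?thesis .
qed

lemma D1_degree:
  assumes s: "1 \<le> s" and deg: "degree G \<le> s" and h: "homP e G" and nz: "coeff G s \<noteq> 0"
  shows "total_degree (Dj 1 G s) = 2 * e"
proof -
  have "homog (0 + (e + e)) (of_nat s * (coeff G s * coeff G s))"
    using h unfolding homP_def by (intro homog_mult homog_of_nat) auto
  moreover have "of_nat s * (coeff G s * coeff G s) \<noteq> (0::mpoly)" using s nz by simp
  ultimately show ?thesis using D1_formula[OF s deg] total_degree_homog by simp
qed


lemma D2_genP2:
  "Dj 2 (genP 2) 2 = - (coeff (genP 2) 2 * psc 2 (genP 2) 2 (pderiv (genP 2)) 1)"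
proof -
  define G where "G = genP 2"
  define A where "A = mat 4 4 (\<lambda>(r,c). discr_mat G 2 $$ (r,c))"
  define N where "N = subres_mat 2 G 2 (pderiv G) 1"
  have c3: "coeff G 3 = 0" "coeff G 4 = 0" unfolding G_def coeff_genP by auto
  have Aent: "A $$ (r,c) = shcoeff (if even r then G else pderiv G) (2 - (r div 2 + 1)) (3 - c)"
    if "r < 4" "c < 4" for r c
    using that unfolding A_def discr_mat_def by simp
  have A: "A \<in> carrier_mat 4 4" unfolding A_def by simp
  have dA: "Dj 2 G 2 = det A" unfolding Dj_def A_def by simp
  have col0: "A $$ (i,0) = 0" if "i \<in> {1,2,3}" for i
    using that by (auto simp: Aent shcoeff_def coeff_pderiv c3)
  have a00: "A $$ (0,0) = coeff G 2" by (simp add: Aent shcoeff_def)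
  have "det A = (\<Sum>i<4. A $$ (i,0) * cofactor A i 0)"
    by (rule laplace_expansion_column[OF A]) simp
  also have "\<dots> = A $$ (0,0) * cofactor A 0 0"
    by (simp add: lessThan_nat_numeral col0)
  finally have dA2: "det A = coeff G 2 * det (mat_delete A 0 0)"
    by (simp add: a00 cofactor_def)
  have d0: "delta0 2 1 2 = 1" by (simp add: delta0_def)
  have N: "N \<in> carrier_mat 3 3" unfolding carrier_mat_def N_def by (simp add: dim_subres_mat delta0_def)
  have Nent: "N $$ (r,c) = (if r < 1 then shcoeff G (1 - 1 - r) (3 - 1 - c)
       else shcoeff (pderiv G) (2 - 1 - (r - 1)) (3 - 1 - c))" if "r < 3" "c < 3" for r c
    using that unfolding N_def subres_mat_def Let_def d0 by (simp add: numeral_2_eq_2)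
  have three: "i < 3 \<Longrightarrow> i = 0 \<or> i = 1 \<or> i = 2" for i :: nat by auto
  have sw: "mat_delete A 0 0 = swaprows 0 1 N"
  proof (rule eq_matI)
    show "dim_row (mat_delete A 0 0) = dim_row (swaprows 0 1 N)" using A N by simp
    show "dim_col (mat_delete A 0 0) = dim_col (swaprows 0 1 N)" using A N by simp
    fix i j assume ij: "i < dim_row (swaprows 0 1 N)" "j < dim_col (swaprows 0 1 N)"
    then have i: "i < 3" and j: "j < 3" using N by auto
    have "mat_delete A 0 0 $$ (i,j) = A $$ (Suc i, Suc j)"
      using i j A unfolding mat_delete_def by simp
    then show "mat_delete A 0 0 $$ (i,j) = swaprows 0 1 N $$ (i,j)"
      using three[OF i] three[OF j] N i j by (auto simp: Aent Nent)
  qed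
  have dN: "det (mat_delete A 0 0) = - det N"
    unfolding sw by (rule det_swaprows[OF _ _ _ N]) auto
  have mm: "mat 3 3 (\<lambda>(r,c). if c < 3 - 1 then N $$ (r,c) else N $$ (r, 3 - 1 - 0)) = N"
  proof (rule eq_matI)
    fix i j assume "i < dim_row N" "j < dim_col N"
    then have i: "i < 3" and j: "j < 3" using N by auto
    then show "mat 3 3 (\<lambda>(r,c). if c < 3 - 1 then N $$ (r,c) else N $$ (r, 3 - 1 - 0)) $$ (i,j) = N $$ (i,j)"
      using three[OF j] by auto
  qed (use N in auto)
  have ps: "psc 2 G 2 (pderiv G) 1 = det N"
  proof -
    have dN3: "dim_row N = 3" "dim_col N = 3" using N by auto
    have "coeff (dp N) 0 = det N" unfolding dp_def Let_def dN3
      by (simp only: diff_self_eq_0 atMost_0 sum.insert_if finite.emptyI empty_iff if_False sum.empty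
         add_0_right coeff_monom if_True mm refl)
    then show ?thesis unfolding psc_def subres_def N_def by simp
  qed
  show ?thesis using dA dA2 dN ps unfolding G_def by simp
qed

lemma homog_D2:
  "homog 4 (Dj 2 (genP 2) 2)"
proof -
  have "homog (4 * 1) (det (mat 4 4 (\<lambda>(r,c). discr_mat (genP 2) 2 $$ (r,c))))"
  proof (rule homog_det)
    fix i j :: nat assume ij: "i < 4" "j < 4"
    have "mat 4 4 (\<lambda>(r,c). discr_mat (genP 2) 2 $$ (r,c)) $$ (i,j) =
       shcoeff (if even i then genP 2 else pderiv (genP 2)) (2 - (i div 2 + 1)) (2*2 - 1 - j)"
      using ij unfolding discr_mat_def by simp
    moreover have "homog 1 (shcoeff (if even i then genP 2 else pderiv (genP 2)) (2 - (i div 2 + 1)) (2*2 - 1 - j))"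
      using homog_shcoeff[OF homP_genP] homog_shcoeff[OF homP_pderiv[OF homP_genP]] by simp
    ultimately show "homog 1 (mat 4 4 (\<lambda>(r,c). discr_mat (genP 2) 2 $$ (r,c)) $$ (i,j))" by simp
  qed simp
  then show ?thesis unfolding Dj_def by simp
qed


lemma conj_eq: "conj mu i = length (filter (\<lambda>x. i \<le> x) mu)"
  unfolding conj_def length_filter_conv_card by simp

lemma sum_list_ge_length: "\<forall>x\<in>set xs. (0::nat) < x \<Longrightarrow> length xs \<le> sum_list xs"
  by (induction xs) auto

lemma finite_Mset: "finite (Mset n)"
proof (rule finite_subset)
  show "Mset n \<subseteq> {xs. set xs \<subseteq> {..n} \<and> length xs \<le> n}"
  proof
    fix xs assume "xs \<in> Mset n"
    then have p: "\<forall>x\<in>set xs. 0 < x" and s: "sum_list xs = n" unfolding Mset_def by auto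
    have "set xs \<subseteq> {..n}" using s member_le_sum_list by fastforce
    moreover have "length xs \<le> n" using sum_list_ge_length[OF p] s by simp
    ultimately show "xs \<in> {xs. set xs \<subseteq> {..n} \<and> length xs \<le> n}" by simp
  qed
  show "finite {xs. set xs \<subseteq> {..n} \<and> length xs \<le> n}"
    by (rule finite_lists_length_le) simp
qed

lemma finite_Sset: "finite (Sset n mu)"
proof -
  let ?f = "\<lambda>(i,j). Dj j (Gt n mu i) (sdeg mu i)"
  have 1: "{Dj j (Gt n mu i) (sdeg mu i) | i j. i + 2 \<le> hd mu \<and> conj mu (i+1) + 1 \<le> j \<and> j \<le> sdeg mu i}
     \<subseteq> ?f ` (SIGMA i:{..hd mu}. {..sdeg mu i})" by force
  have 3: "{Dj j (Gt n mu i) (sdeg mu i) | i j. i + 1 \<le> hd mu \<and> 1 \<le> j \<and> j \<le> conj mu (i+1)}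
     \<subseteq> ?f ` (SIGMA i:{..hd mu}. {..conj mu (i+1)})" by force
  show ?thesis unfolding Sset_def
    using finite_subset[OF 1] finite_subset[OF 3] by auto
qed

lemma le_dYHZ: "mu \<in> Mset n \<Longrightarrow> X \<in> Sset n mu \<Longrightarrow> total_degree X \<le> dYHZ n"
  unfolding dYHZ_def
  by (rule Max_ge) (use finite_Mset finite_Sset in auto)

lemma key:
  assumes mu: "mu \<in> Mset n"
    and hyp: "coeff (Gt n mu i) (sdeg mu i) \<noteq> 0"
    and i: "Suc i \<le> hd mu" and s: "sdeg mu i = 1" and n: "n \<le> sdeg mu 0"
    and c: "1 \<le> conj mu (Suc i)"
  shows "2 * E mu i \<le> dYHZ n"
proof -
  have "Dj 1 (Gt n mu i) (sdeg mu i) \<in> Sset n mu" unfolding Sset_def using i c by auto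
  moreover have "total_degree (Dj 1 (Gt n mu i) (sdeg mu i)) = 2 * E mu i"
    by (rule D1_degree) (use s degree_Gt[OF _ n, of i] i homP_Gt[of i mu n] hyp in auto)
  ultimately show ?thesis using le_dYHZ[OF mu] by metis
qed


lemma odd_case:
  assumes k: "1 \<le> k"
    and hyp: "\<forall>mu\<in>Mset (2*k+1). \<forall>i. i + 1 \<le> hd mu \<longrightarrow> coeff (Gt (2*k+1) mu i) (sdeg mu i) \<noteq> 0"
  shows "3 ^ k \<le> dYHZ (2*k+1)"
proof -
  define mu where "mu = [k+1, k]"
  have mu: "mu \<in> Mset (2*k+1)" unfolding mu_def Mset_def using k by auto
  have hd: "hd mu = k+1" unfolding mu_def by simp
  have cj: "conj mu i = (if i \<le> k+1 then 1 else 0) + (if i \<le> k then 1 else 0)" for i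
    unfolding conj_eq mu_def by simp
  have sd: "sdeg mu i = 2*(k-i)+1" if "i \<le> k" for i
    using that
  proof (induction i rule: inc_induct)
    case base
    show ?case using sdeg_Suc[of k mu] sdeg_hd[of mu] hd cj[of "Suc k"] by simp
  next
    case (step m)
    then show ?case using sdeg_Suc[of m mu] hd cj[of "Suc m"] by simp
  qed
  have Ek: "E mu i = 3 ^ i" if "i \<le> k" for i
    using that
  proof (induction i)
    case 0 then show ?case by simp
  next
    case (Suc i)
    have "delta0 (sdeg mu i) (sdeg mu i - 1) (conj mu (Suc i)) = 1"
      using Suc.prems sd[of i] cj[of "Suc i"] by (simp add: delta0_def)
    then show ?case using Suc cj[of "Suc i"] by simp
  qed
  have "2 * E mu k \<le> dYHZ (2*k+1)"
  proof (rule key[OF mu])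
    show "coeff (Gt (2*k+1) mu k) (sdeg mu k) \<noteq> 0" using hyp mu hd by auto
    show "Suc k \<le> hd mu" using hd by simp
    show "sdeg mu k = 1" using sd[of k] by simp
    show "2*k+1 \<le> sdeg mu 0" using sd[of 0] by simp
    show "1 \<le> conj mu (Suc k)" using cj[of "Suc k"] by simp
  qed
  then show ?thesis using Ek[of k] by simp
qed

lemma even_case:
  assumes k: "2 \<le> k"
    and hyp: "\<forall>mu\<in>Mset (2*k). \<forall>i. i + 1 \<le> hd mu \<longrightarrow> coeff (Gt (2*k) mu i) (sdeg mu i) \<noteq> 0"
  shows "3 ^ k \<le> dYHZ (2*k)"
proof -
  define mu where "mu = [k, k-1, 1]"
  have mu: "mu \<in> Mset (2*k)" unfolding mu_def Mset_def using k by auto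
  have hd: "hd mu = k" unfolding mu_def by simp
  have cj: "conj mu i = (if i \<le> k then 1 else 0) + (if i \<le> k-1 then 1 else 0) + (if i \<le> 1 then 1 else 0)" for i
    unfolding conj_eq mu_def by auto
  have sd: "sdeg mu i = 2*(k-1-i)+1" if "1 \<le> i" "i \<le> k-1" for i
    using that(2,1)
  proof (induction i rule: inc_induct)
    case base
    show ?case using sdeg_Suc[of "k-1" mu] sdeg_hd[of mu] hd cj[of k] k by simp
  next
    case (step m)
    then show ?case using sdeg_Suc[of m mu] hd cj[of "Suc m"] by simp
  qed
  have sd0: "sdeg mu 0 = 2*k"
  proof -
    have "1 \<le> k - 1" using k by simp
    then show ?thesis using sdeg_Suc[of 0 mu] hd k sd[of 1] cj[of 1] by simp
  qed
  have E1: "E mu 1 = 5"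
    using sd0 cj[of 1] k by (simp add: delta0_def)
  have Ek: "E mu (Suc i) = 5 * 3 ^ i" if "Suc i \<le> k - 1" for i
    using that
  proof (induction i)
    case 0 then show ?case using E1 by simp
  next
    case (Suc i)
    have "delta0 (sdeg mu (Suc i)) (sdeg mu (Suc i) - 1) (conj mu (Suc (Suc i))) = 1"
      using Suc.prems sd[of "Suc i"] cj[of "Suc (Suc i)"] by (simp add: delta0_def)
    then show ?case using Suc cj[of "Suc (Suc i)"] by simp
  qed
  have "2 * E mu (k-1) \<le> dYHZ (2*k)"
  proof (rule key[OF mu])
    show "coeff (Gt (2*k) mu (k-1)) (sdeg mu (k-1)) \<noteq> 0" using hyp mu hd k by auto
    show "Suc (k-1) \<le> hd mu" unfolding hd using k by simp
    show "sdeg mu (k-1) = 1" using sd[of "k-1"] k by simp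
    show "2*k \<le> sdeg mu 0" using sd0 by simp
    show "1 \<le> conj mu (Suc (k-1))" using cj[of k] k by simp
  qed
  note T = this
  define j where "j = k - 2"
  have j: "k = j + 2" using k unfolding j_def by simp
  have km: "k - 1 = Suc j" using j by simp
  have E5: "E mu (Suc j) = 5 * 3 ^ j"
    using Ek[of j] j by simp
  have A: "2 * (5 * 3 ^ j) \<le> dYHZ (2*k)" using T unfolding km E5 .
  have B: "(3::nat) ^ k = 9 * 3 ^ j" unfolding j by (simp add: power_add)
  show ?thesis unfolding B using A by linarith
qed


lemma two_case:
  assumes hyp: "\<forall>mu\<in>Mset 2. \<forall>i. i + 1 \<le> hd mu \<longrightarrow>
           coeff (Gt 2 mu i) (sdeg mu i) \<noteq> 0 \<and>
           psc (sdeg mu i) (Gt 2 mu i) (sdeg mu i) (pderiv (Gt 2 mu i)) (sdeg mu i - 1) \<noteq> 0"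
  shows "3 \<le> dYHZ 2"
proof -
  define mu where "mu = [1,1::nat]"
  have mu: "mu \<in> Mset 2" unfolding mu_def Mset_def by auto
  have hd: "hd mu = 1" unfolding mu_def by simp
  have c1: "conj mu 1 = 2" unfolding conj_eq mu_def by simp
  have s0: "sdeg mu 0 = 2" unfolding sdeg_def hd using c1 by simp
  have G0: "Gt 2 mu 0 = genP 2" by simp
  have h0: "coeff (Gt 2 mu 0) (sdeg mu 0) \<noteq> 0 \<and>
           psc (sdeg mu 0) (Gt 2 mu 0) (sdeg mu 0) (pderiv (Gt 2 mu 0)) (sdeg mu 0 - 1) \<noteq> 0"
    using hyp[rule_format, OF mu, of 0] hd by simp
  have e: "(2::nat) - 1 = 1" by simp
  have h: "coeff (genP 2) 2 \<noteq> 0 \<and> psc 2 (genP 2) 2 (pderiv (genP 2)) 1 \<noteq> 0"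
    using h0 unfolding s0 G0 e .
  have X: "Dj 2 (genP 2) 2 \<in> Sset 2 mu" unfolding Sset_def hd s0 G0 using s0 by simp
  have nz: "Dj 2 (genP 2) 2 \<noteq> 0" unfolding D2_genP2 using h by simp
  have "total_degree (Dj 2 (genP 2) 2) = 4" by (rule total_degree_homog[OF homog_D2 nz])
  then show ?thesis using le_dYHZ[OF mu X] by simp
qed

theorem mainTheorem6:
  fixes n :: nat
  assumes "n \<ge> 2"
    and "\<forall>mu\<in>Mset n. \<forall>i. i + 1 \<le> hd mu \<longrightarrow>
           coeff (Gt n mu i) (sdeg mu i) \<noteq> 0 \<and>
           psc (sdeg mu i) (Gt n mu i) (sdeg mu i) (pderiv (Gt n mu i)) (sdeg mu i - 1) \<noteq> 0"
  shows "dYHZ n \<ge> 3 ^ (n div 2)"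
proof -
  have "n = 2 \<or> odd n \<or> (even n \<and> 4 \<le> n)" using assms(1) by presburger
  then consider "n = 2" | "odd n" | "even n" "n \<ge> 4" by blast
  then show ?thesis
  proof cases
    case 1
    have "3 \<le> dYHZ 2" by (rule two_case) (use assms(2) 1 in blast)
    then show ?thesis using 1 by simp
  next
    case 2
    define k where "k = n div 2"
    have n: "n = 2*k+1" using 2 unfolding k_def by simp
    have k: "1 \<le> k" using assms(1) 2 n by simp
    have "3 ^ k \<le> dYHZ (2*k+1)"
      by (rule odd_case[OF k]) (use assms(2) n in blast)
    moreover have "n div 2 = k" unfolding k_def ..
    ultimately show ?thesis using n by simp
  next
    case 3
    define k where "k = n div 2"
    have n: "n = 2*k" using 3 unfolding k_def by simp
    have k: "2 \<le> k" using 3 n by simp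
    have "3 ^ k \<le> dYHZ (2*k)"
      by (rule even_case[OF k]) (use assms(2) n in blast)
    moreover have "n div 2 = k" unfolding k_def ..
    ultimately show ?thesis using n by simp
  qed
qed

end
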